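(* For every (closed) term $P$, $$[\![P]\!] = \{ s \in \Sigma^* \mid \exists M.\ P \overset{s}{\Rightarrow} M \text{ and } M \text{ is not doomed} \}.$$
   Context: Fix a set $\Sigma$ of events. Terms: $P, Q ::= \mathit{STOP} \mid \mathit{FAIL} \mid ?x{:}E \rightarrow P \mid P \,\Box\, Q \mid P \parallel_E Q$, where an event set $E$ is $f(y_1,\dots,y_n)$ with $f : \Sigma^n \to 2^\Sigma$ computable and each $y_i$ an event variable or event; $x$ is bound in $P$ in $?x{:}E\rightarrow P$. Terms are closed, so each $E$ denotes a subset of $\Sigma$; $[e/x]P$ is substitution of event $e$ for $x$. Trace semantics. A trace set is a prefix-closed subset of $\Sigma^*$ (possibly empty); $\varepsilon$ is the empty trace. For a trace set $T$: $eT := \{\varepsilon\} \cup \{et \mid t \in T\}$, $T(e) := \{t \mid et \in T\}$. For $E \subseteq \Sigma$, $\parallel_E$ on trace sets is the unique function with $\varnothing \parallel_E T = T \parallel_E \varnothing = \varnothing$ and, for nonempty $T_1, T_2$, $T_1 \parallel_E T_2 = \bigcup_{e \in E} e(T_1(e) \parallel_E T_2(e)) \cup \bigcup_{e \in \Sigma\setminus E}( e(T_1(e) \parallel_E T_2) \cup e(T_1 \parallel_E T_2(e)))$. The semantics: $[\![\mathit{STOP}]\!] = \{\varepsilon\}$, $[\![\mathit{FAIL}]\!] = \varnothing$, $[\![?x{:}E \rightarrow P]\!] = \{\varepsilon\} \cup \bigcup_{e \in E} e[\![ [e/x]P ]\!]$, $[\![P \Box Q]\!] = [\![P]\!] \cup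 [\![Q]\!]$, $[\![P \parallel_E Q]\!] = [\![P]\!] \parallel_E [\![Q]\!]$. Operational semantics. Actions $a ::= e \mid \tau$, $\tau \notin \Sigma$. Doomed terms: $D ::= \mathit{FAIL} \mid D \Box D \mid D \parallel_E P \mid P \parallel_E D$; viable terms $\hat P, \hat Q$ are non-doomed terms. The internal transition relation $\xrightarrow{a}$ is the least relation closed under: (1) $e \in E \Rightarrow (?x{:}E \rightarrow P) \xrightarrow{e} [e/x]P$; (2) $P \xrightarrow{\tau} P' \Rightarrow P \Box Q \xrightarrow{\tau} P' \Box Q$; (3) $Q \xrightarrow{\tau} Q' \Rightarrow P \Box Q \xrightarrow{\tau} P \Box Q'$; (4) $P \xrightarrow{e} P' \Rightarrow P \Box Q \xrightarrow{e} P'$; (5) $Q \xrightarrow{e} Q' \Rightarrow P \Box Q \xrightarrow{e} Q'$; (6) $P \xrightarrow{a} P'$, $a \notin E$, $\hat Q$ viable $\Rightarrow P \parallel_E \hat Q \xrightarrow{a} P' \parallel_E \hat Q$; (7) $Q \xrightarrow{a} Q'$, $a \notin E$, $\hat P$ viable $\Rightarrow \hat P \parallel_E Q \xrightarrow{a} \hat P \parallel_E Q'$; (8) $\hat P, \hat Q$ viable, $\hat P \xrightarrow{e} P'$, $\hat Q \xrightarrow{e} Q'$, $e \in E$ $\Rightarrow \hat P \parallel_E \hat Q \xrightarrow{e} P' \parallel_E Q'$; (9) $D_1, D_2$ doomed, $D_1 \xrightarrow{\tau} P_1 \Rightarrow D_1 \parallel_E D_2 \xrightarrow{\tau} P_1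 \parallel_E D_2$; (10) $D_1, D_2$ doomed, $D_2 \xrightarrow{\tau} P_2 \Rightarrow D_1 \parallel_E D_2 \xrightarrow{\tau} D_1 \parallel_E P_2$; (11) $\mathit{FAIL} \Box \mathit{FAIL} \xrightarrow{\tau} \mathit{FAIL}$; (12) $\mathit{FAIL} \parallel_E P \xrightarrow{\tau} \mathit{FAIL}$; (13) $P \parallel_E \mathit{FAIL} \xrightarrow{\tau} \mathit{FAIL}$. For $s \in \Sigma^*$, the visible transition $P \overset{s}{\Rightarrow} Q$ holds iff there is a finite sequence (possibly of length zero) of internal transitions $P = P_0 \xrightarrow{a_1} P_1 \cdots \xrightarrow{a_n} P_n = Q$ such that deleting all $\tau$'s from $a_1 \cdots a_n$ yields $s$. *)

theory Defs
  imports Main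
begin

text \<open>Events range over an arbitrary (nonempty) type 'e, playing the role of Sigma.
  Event variables are named by strings.\<close>

datatype 'e atom = AEv 'e | AVar string

text \<open>An event set f(y1,...,yn): a function from event tuples (lists) to sets of events,
  applied to a list of atoms (events or event variables).\<close>
datatype 'e eset = ESet "'e list \<Rightarrow> 'e set" "'e atom list"

datatype 'e proc =
    STOP
  | FAIL
  | Pre string "'e eset" "'e proc"          \<comment> \<open>?x:E \<rightarrow> P, x bound in P\<close>
  | Ext "'e proc" "'e proc"
  | Par "'e proc" "'e eset" "'e proc"

fun fv_atom :: "'e atom \<Rightarrow> string set" where
  "fv_atom (AEv e) = {}"
| "fv_atom (AVar y) = {y}"

fun fv_eset :: "'e eset \<Rightarrow> string set" where
  "fv_eset (ESet f ys) = (\<Union>y\<in>set ys. fv_atom y)"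

fun fv :: "'e proc \<Rightarrow> string set" where
  "fv STOP = {}"
| "fv FAIL = {}"
| "fv (Pre x E P) = fv_eset E \<union> (fv P - {x})"
| "fv (Ext P Q) = fv P \<union> fv Q"
| "fv (Par P E Q) = fv P \<union> fv_eset E \<union> fv Q"

definition closed :: "'e proc \<Rightarrow> bool" where
  "closed P \<longleftrightarrow> fv P = {}"

fun subst_atom :: "'e \<Rightarrow> string \<Rightarrow> 'e atom \<Rightarrow> 'e atom" where
  "subst_atom e x (AEv d) = AEv d"
| "subst_atom e x (AVar y) = (if y = x then AEv e else AVar y)"

fun subst_eset :: "'e \<Rightarrow> string \<Rightarrow> 'e eset \<Rightarrow> 'e eset" where
  "subst_eset e x (ESet f ys) = ESet f (map (subst_atom e x) ys)"

text \<open>[e/x]P (capture is impossible since e is a closed event).\<close>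
fun subst :: "'e \<Rightarrow> string \<Rightarrow> 'e proc \<Rightarrow> 'e proc" where
  "subst e x STOP = STOP"
| "subst e x FAIL = FAIL"
| "subst e x (Pre y E P) = Pre y (subst_eset e x E) (if y = x then P else subst e x P)"
| "subst e x (Ext P Q) = Ext (subst e x P) (subst e x Q)"
| "subst e x (Par P E Q) = Par (subst e x P) (subst_eset e x E) (subst e x Q)"

fun psize :: "'e proc \<Rightarrow> nat" where
  "psize STOP = 0"
| "psize FAIL = 0"
| "psize (Pre x E P) = Suc (psize P)"
| "psize (Ext P Q) = Suc (psize P + psize Q)"
| "psize (Par P E Q) = Suc (psize P + psize Q)"

lemma psize_subst[simp]: "psize (subst e x P) = psize P"
  by (induction P) auto

text \<open>Denotation of an event set (meaningful for closed event sets; variables are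
  mapped to an unspecified event, which never happens for closed terms).\<close>
fun atom_val :: "'e atom \<Rightarrow> 'e" where
  "atom_val (AEv e) = e"
| "atom_val (AVar y) = undefined"

fun eset_val :: "'e eset \<Rightarrow> 'e set" where
  "eset_val (ESet f ys) = f (map atom_val ys)"

type_synonym 'e traceset = "'e list set"

definition prefixT :: "'e \<Rightarrow> 'e traceset \<Rightarrow> 'e traceset" where
  "prefixT e T = insert [] ((\<lambda>t. e # t) ` T)"

definition afterT :: "'e traceset \<Rightarrow> 'e \<Rightarrow> 'e traceset" where
  "afterT T e = {t. e # t \<in> T}"

fun par_mem :: "'e set \<Rightarrow> 'e list \<Rightarrow> 'e traceset \<Rightarrow> 'e traceset \<Rightarrow> bool" where
  "par_mem E [] T1 T2 = (T1 \<noteq> {} \<and> T2 \<noteq> {})"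
| "par_mem E (e # t) T1 T2 = (T1 \<noteq> {} \<and> T2 \<noteq> {} \<and>
     (if e \<in> E then par_mem E t (afterT T1 e) (afterT T2 e)
      else par_mem E t (afterT T1 e) T2 \<or> par_mem E t T1 (afterT T2 e)))"

definition parT :: "'e traceset \<Rightarrow> 'e set \<Rightarrow> 'e traceset \<Rightarrow> 'e traceset" where
  "parT T1 E T2 = {s. par_mem E s T1 T2}"

text \<open>Sanity check: parT satisfies the defining equations of the paper.\<close>
lemma parT_empty1: "parT {} E T = {}" and parT_empty2: "parT T E {} = {}"
proof -
  have "\<not> par_mem E s {} T" for s by (cases s) auto
  moreover have "\<not> par_mem E s T {}" for s by (cases s) auto
  ultimately show "parT {} E T = {}" "parT T E {} = {}" by (auto simp: parT_def)
qed

lemma parT_eq: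
  fixes E :: "'e set"
  assumes "T1 \<noteq> {}" "T2 \<noteq> {}"
  shows "parT T1 E T2 =
    (\<Union>e\<in>E. prefixT e (parT (afterT T1 e) E (afterT T2 e))) \<union>
    (\<Union>e\<in>UNIV - E. prefixT e (parT (afterT T1 e) E T2) \<union> prefixT e (parT T1 E (afterT T2 e)))"
  (is "?L = ?R")
proof
  show "?L \<subseteq> ?R"
  proof
    fix s assume "s \<in> ?L"
    then show "s \<in> ?R"
    proof (cases s)
      case Nil
      obtain e :: 'e where True by simp
      then show ?thesis using Nil \<open>s \<in> ?L\<close>
        by (cases "e \<in> E") (auto simp: prefixT_def parT_def)
    next
      case (Cons e t)
      then show ?thesis using \<open>s \<in> ?L\<close>
        by (cases "e \<in> E") (auto simp: prefixT_def parT_def)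
    qed
  qed
next
  show "?R \<subseteq> ?L"
    using assms by (auto simp: prefixT_def parT_def)
qed

function sem :: "'e proc \<Rightarrow> 'e traceset" where
  "sem STOP = {[]}"
| "sem FAIL = {}"
| "sem (Pre x E P) = insert [] (\<Union>e\<in>eset_val E. prefixT e (sem (subst e x P)))"
| "sem (Ext P Q) = sem P \<union> sem Q"
| "sem (Par P E Q) = parT (sem P) (eset_val E) (sem Q)"
  by pat_completeness auto
termination by (relation "measure psize") auto

datatype 'e act = Tau | Vis 'e

definition act_in :: "'e act \<Rightarrow> 'e set \<Rightarrow> bool" where
  "act_in a E = (case a of Tau \<Rightarrow> False | Vis e \<Rightarrow> e \<in> E)"

inductive doomed :: "'e proc \<Rightarrow> bool" where
  "doomed FAIL"
| "doomed D1 \<Longrightarrow> doomed D2 \<Longrightarrow> doomed (Ext D1 D2)"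
| "doomed D \<Longrightarrow> doomed (Par D E P)"
| "doomed D \<Longrightarrow> doomed (Par P E D)"

abbreviation viable :: "'e proc \<Rightarrow> bool" where
  "viable P \<equiv> \<not> doomed P"

inductive step :: "'e proc \<Rightarrow> 'e act \<Rightarrow> 'e proc \<Rightarrow> bool" where
  s1: "e \<in> eset_val E \<Longrightarrow> step (Pre x E P) (Vis e) (subst e x P)"
| s2: "step P Tau P' \<Longrightarrow> step (Ext P Q) Tau (Ext P' Q)"
| s3: "step Q Tau Q' \<Longrightarrow> step (Ext P Q) Tau (Ext P Q')"
| s4: "step P (Vis e) P' \<Longrightarrow> step (Ext P Q) (Vis e) P'"
| s5: "step Q (Vis e) Q' \<Longrightarrow> step (Ext P Q) (Vis e) Q'"
| s6: "step P a P' \<Longrightarrow> \<not> act_in a (eset_val E) \<Longrightarrow> viable Q \<Longrightarrow>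
       step (Par P E Q) a (Par P' E Q)"
| s7: "step Q a Q' \<Longrightarrow> \<not> act_in a (eset_val E) \<Longrightarrow> viable P \<Longrightarrow>
       step (Par P E Q) a (Par P E Q')"
| s8: "viable P \<Longrightarrow> viable Q \<Longrightarrow> step P (Vis e) P' \<Longrightarrow> step Q (Vis e) Q' \<Longrightarrow>
       e \<in> eset_val E \<Longrightarrow> step (Par P E Q) (Vis e) (Par P' E Q')"
| s9: "doomed D1 \<Longrightarrow> doomed D2 \<Longrightarrow> step D1 Tau P1 \<Longrightarrow>
       step (Par D1 E D2) Tau (Par P1 E D2)"
| s10: "doomed D1 \<Longrightarrow> doomed D2 \<Longrightarrow> step D2 Tau P2 \<Longrightarrow>
       step (Par D1 E D2) Tau (Par D1 E P2)"
| s11: "step (Ext FAIL FAIL) Tau FAIL"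
| s12: "step (Par FAIL E P) Tau FAIL"
| s13: "step (Par P E FAIL) Tau FAIL"

inductive weak :: "'e proc \<Rightarrow> 'e list \<Rightarrow> 'e proc \<Rightarrow> bool" where
  weak_refl: "weak P [] P"
| weak_tau: "step P Tau P' \<Longrightarrow> weak P' s Q \<Longrightarrow> weak P s Q"
| weak_vis: "step P (Vis e) P' \<Longrightarrow> weak P' s Q \<Longrightarrow> weak P (e # s) Q"

end

theory Submission
  imports Defs
begin

lemma par_mem_ne: "par_mem E t A B \<Longrightarrow> A \<noteq> {} \<and> B \<noteq> {}"
  by (cases t) auto

lemma par_mem_sym: "par_mem E t A B = par_mem E t B A"
  by (induction t arbitrary: A B) auto

lemma par_mem_symI: "par_mem E t A B \<Longrightarrow> par_mem E t B A"
  using par_mem_sym by metis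

lemma afterT_mono: "A \<subseteq> A' \<Longrightarrow> afterT A e \<subseteq> afterT A' e"
  by (auto simp: afterT_def)

lemma par_mem_mono: "A \<subseteq> A' \<Longrightarrow> B \<subseteq> B' \<Longrightarrow> par_mem E t A B \<Longrightarrow> par_mem E t A' B'"
proof (induction t arbitrary: A B A' B')
  case Nil then show ?case by auto
next
  case (Cons e t)
  have m1: "afterT A e \<subseteq> afterT A' e" using Cons.prems(1) by (rule afterT_mono)
  have m2: "afterT B e \<subseteq> afterT B' e" using Cons.prems(2) by (rule afterT_mono)
  have ne: "A' \<noteq> {}" "B' \<noteq> {}" using Cons.prems by auto
  show ?case
  proof (cases "e \<in> E")
    case True
    then have "par_mem E t (afterT A e) (afterT B e)" using Cons.prems(3) by simp
    then have "par_mem E t (afterT A' e) (afterT B' e)" by (rule Cons.IH[OF m1 m2])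
    then show ?thesis using ne True by simp
  next
    case False
    then have "par_mem E t (afterT A e) B \<or> par_mem E t A (afterT B e)" using Cons.prems(3) by simp
    then have "par_mem E t (afterT A' e) B' \<or> par_mem E t A' (afterT B' e)"
      using Cons.IH[OF m1 Cons.prems(2)] Cons.IH[OF Cons.prems(1) m2] by blast
    then show ?thesis using ne False by simp
  qed
qed

lemma afterT_Union: "afterT (\<Union>F) e = (\<Union>A\<in>F. afterT A e)"
  by (auto simp: afterT_def)

lemma par_mem_Union: "par_mem E t (\<Union>F) B \<Longrightarrow> \<exists>A\<in>F. par_mem E t A B"
proof (induction t arbitrary: F B)
  case Nil then show ?case by auto
next
  case (Cons e t)
  show ?case
  proof (cases "e \<in> E")
    case True
    then have "par_mem E t (\<Union>((\<lambda>A. afterT A e) ` F)) (afterT B e)" "B \<noteq> {}"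
      using Cons.prems by (auto simp: afterT_Union)
    from Cons.IH[OF this(1)] obtain A where "A \<in> F" "par_mem E t (afterT A e) (afterT B e)"
      by blast
    moreover then have "A \<noteq> {}" using par_mem_ne[of E t "afterT A e"] by (auto simp: afterT_def)
    ultimately show ?thesis using True \<open>B \<noteq> {}\<close> by auto
  next
    case False
    then have B: "B \<noteq> {}" using Cons.prems by auto
    from False Cons.prems have
      "par_mem E t (\<Union>((\<lambda>A. afterT A e) ` F)) B \<or> par_mem E t (\<Union>F) (afterT B e)"
      by (auto simp: afterT_Union)
    then show ?thesis
    proof
      assume "par_mem E t (\<Union>((\<lambda>A. afterT A e) ` F)) B"
      from Cons.IH[OF this] obtain A where "A \<in> F" "par_mem E t (afterT A e) B" by blast
      moreover then have "A \<noteq> {}" using par_mem_ne[of E t "afterT A e"] by (auto simp: afterT_def)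
      ultimately show ?thesis using False B by auto
    next
      assume "par_mem E t (\<Union>F) (afterT B e)"
      from Cons.IH[OF this] obtain A where "A \<in> F" "par_mem E t A (afterT B e)" by blast
      moreover then have "A \<noteq> {}" using par_mem_ne by blast
      ultimately show ?thesis using False B by auto
    qed
  qed
qed

lemma par_mem_Union_ex:
  assumes "par_mem E t (\<Union>{f x |x. Q x}) B" shows "\<exists>x. Q x \<and> par_mem E t (f x) B"
proof -
  from par_mem_Union[OF assms] obtain A where A: "A \<in> {f x |x. Q x}" "par_mem E t A B"
    by (elim bexE)
  from A(1) obtain x where "A = f x" "Q x" by blast
  then show ?thesis using A(2) by blast
qed

lemma doomed_sem: "doomed P \<Longrightarrow> sem P = {}"
  by (induction rule: doomed.induct) (auto simp: parT_empty1 parT_empty2)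

lemma sem_empty_doomed: "sem P = {} \<Longrightarrow> doomed P"
proof (induction P)
  case (Par P E Q)
  show ?case
  proof (cases "sem P = {} \<or> sem Q = {}")
    case True then show ?thesis using Par by (auto intro: doomed.intros)
  next
    case False
    then have "[] \<in> sem (Par P E Q)" by (simp add: parT_def)
    then show ?thesis using Par by auto
  qed
qed (auto intro: doomed.intros)

lemma doomed_iff: "doomed P \<longleftrightarrow> sem P = {}"
  using doomed_sem sem_empty_doomed by blast

lemma step_sound: "step P a P' \<Longrightarrow>
  (a = Tau \<longrightarrow> sem P' = sem P) \<and> (\<forall>e. a = Vis e \<longrightarrow> (\<forall>t. t \<in> sem P' \<longrightarrow> e # t \<in> sem P))"
proof (induction rule: step.induct)
  case (s1 e E x P)
  then show ?case by (auto simp: prefixT_def)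
next
  case (s6 P a P' E Q)
  have "e # t \<in> sem (Par P E Q)" if "a = Vis e" "t \<in> sem (Par P' E Q)" for e t
  proof -
    have pm: "par_mem (eset_val E) t (sem P') (sem Q)" using that by (simp add: parT_def)
    have sub: "sem P' \<subseteq> afterT (sem P) e" using s6 that by (auto simp: afterT_def)
    have ne: "sem P' \<noteq> {}" "sem Q \<noteq> {}" using par_mem_ne[OF pm] by auto
    then have "sem P \<noteq> {}" using sub by (auto simp: afterT_def)
    moreover have "e \<notin> eset_val E" using s6 that by (simp add: act_in_def)
    ultimately show ?thesis
      using par_mem_mono[OF sub order_refl pm] ne by (simp add: parT_def)
  qed
  then show ?case using s6 by auto
next
  case (s7 Q a Q' E P)
  have "e # t \<in> sem (Par P E Q)" if "a = Vis e" "t \<in> sem (Par P E Q')" for e t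
  proof -
    have pm: "par_mem (eset_val E) t (sem P) (sem Q')" using that by (simp add: parT_def)
    have sub: "sem Q' \<subseteq> afterT (sem Q) e" using s7 that by (auto simp: afterT_def)
    have ne: "sem P \<noteq> {}" "sem Q' \<noteq> {}" using par_mem_ne[OF pm] by auto
    then have "sem Q \<noteq> {}" using sub by (auto simp: afterT_def)
    moreover have "e \<notin> eset_val E" using s7 that by (simp add: act_in_def)
    ultimately show ?thesis
      using par_mem_mono[OF order_refl sub pm] ne by (simp add: parT_def)
  qed
  then show ?case using s7 by auto
next
  case (s8 P Q e P' Q' E)
  have "e # t \<in> sem (Par P E Q)" if "t \<in> sem (Par P' E Q')" for t
  proof -
    have pm: "par_mem (eset_val E) t (sem P') (sem Q')" using that by (simp add: parT_def)
    have sub: "sem P' \<subseteq> afterT (sem P) e" "sem Q' \<subseteq> afterT (sem Q) e"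
      using s8 by (auto simp: afterT_def)
    have ne: "sem P' \<noteq> {}" "sem Q' \<noteq> {}" using par_mem_ne[OF pm] by auto
    then have "sem P \<noteq> {}" "sem Q \<noteq> {}" using sub by (auto simp: afterT_def)
    then show ?thesis
      using par_mem_mono[OF sub pm] s8 by (simp add: parT_def)
  qed
  then show ?case by auto
next
  case (s2 P P' Q) then show ?case by simp
next
  case (s3 Q Q' P) then show ?case by simp
next
  case (s4 P e P' Q) then show ?case by simp
next
  case (s5 Q e Q' P) then show ?case by simp
next
  case (s9 D1 D2 P1 E) then show ?case by simp
next
  case (s10 D1 D2 P2 E) then show ?case by simp
next
  case s11 then show ?case by simp
next
  case (s12 E P) then show ?case by (simp add: parT_empty1)
next
  case (s13 P E) then show ?case by (simp add: parT_empty2)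
qed

lemma sem_nil: "sem P \<noteq> {} \<Longrightarrow> [] \<in> sem P"
  by (induction P) (auto simp: parT_def dest: par_mem_ne)

lemma sound: "weak P s M \<Longrightarrow> \<not> doomed M \<Longrightarrow> s \<in> sem P"
proof (induction rule: weak.induct)
  case (weak_refl P)
  then show ?case using sem_nil doomed_iff by blast
next
  case (weak_tau P P' s Q)
  then show ?case using step_sound by blast
next
  case (weak_vis P e P' s Q)
  then show ?case using step_sound by blast
qed

lemma step_complete: "\<forall>t. e # t \<in> sem P \<longrightarrow> (\<exists>P'. step P (Vis e) P' \<and> t \<in> sem P')"
proof (induction P)
  case (Pre x E P)
  show ?case
  proof (intro allI impI)
    fix t assume "e # t \<in> sem (Pre x E P)"
    then have "e \<in> eset_val E" "t \<in> sem (subst e x P)" by (auto simp: prefixT_def split: if_split_asm)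
    then show "\<exists>P'. step (Pre x E P) (Vis e) P' \<and> t \<in> sem P'" using step.s1[of e E x P] by blast
  qed
next
  case (Ext P Q)
  then show ?case by simp (meson step.s4 step.s5)
next
  case (Par P E Q)
  have cov: "afterT (sem R) e \<subseteq> \<Union>{sem R' |R'. step R (Vis e) R'}"
    if H: "\<forall>t. e # t \<in> sem R \<longrightarrow> (\<exists>R'. step R (Vis e) R' \<and> t \<in> sem R')" for R
  proof
    fix x assume "x \<in> afterT (sem R) e"
    then obtain R' where "step R (Vis e) R'" "x \<in> sem R'" using H unfolding afterT_def by blast
    then show "x \<in> \<Union>{sem R' |R'. step R (Vis e) R'}" by blast
  qed
  show ?case
  proof (intro allI impI)
    fix t assume "e # t \<in> sem (Par P E Q)"
    then have pm: "par_mem (eset_val E) (e # t) (sem P) (sem Q)" by (simp add: parT_def)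
    then have "sem P \<noteq> {}" "sem Q \<noteq> {}" using par_mem_ne by blast+
    then have vP: "\<not> doomed P" and vQ: "\<not> doomed Q" using doomed_sem by blast+
    show "\<exists>P'. step (Par P E Q) (Vis e) P' \<and> t \<in> sem P'"
    proof (cases "e \<in> eset_val E")
      case True
      with pm have "par_mem (eset_val E) t (afterT (sem P) e) (afterT (sem Q) e)" by simp
      then have "par_mem (eset_val E) t (\<Union>{sem R' |R'. step P (Vis e) R'})
          (\<Union>{sem R' |R'. step Q (Vis e) R'})"
        by (rule par_mem_mono[OF cov[OF Par.IH(1)] cov[OF Par.IH(2)]])
      from par_mem_Union_ex[OF this] obtain P' where P': "step P (Vis e) P'"
        "par_mem (eset_val E) t (sem P') (\<Union>{sem R' |R'. step Q (Vis e) R'})"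
        by blast
      from P'(2) have "par_mem (eset_val E) t (\<Union>{sem R' |R'. step Q (Vis e) R'}) (sem P')"
        by (rule par_mem_symI)
      from par_mem_Union_ex[OF this] obtain Q' where Q': "step Q (Vis e) Q'"
        "par_mem (eset_val E) t (sem Q') (sem P')"
        by blast
      from Q'(2) have "par_mem (eset_val E) t (sem P') (sem Q')" by (rule par_mem_symI)
      then have "t \<in> sem (Par P' E Q')" by (simp add: parT_def)
      moreover have "step (Par P E Q) (Vis e) (Par P' E Q')"
        using step.s8[OF vP vQ P'(1) Q'(1) True] .
      ultimately show ?thesis by blast
    next
      case False
      with pm have "par_mem (eset_val E) t (afterT (sem P) e) (sem Q) \<or>
          par_mem (eset_val E) t (sem P) (afterT (sem Q) e)" by simp
      then show ?thesis
      proof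
        assume "par_mem (eset_val E) t (afterT (sem P) e) (sem Q)"
        then have "par_mem (eset_val E) t (\<Union>{sem R' |R'. step P (Vis e) R'}) (sem Q)"
          by (rule par_mem_mono[OF cov[OF Par.IH(1)] order_refl])
        from par_mem_Union_ex[OF this] obtain P' where
          "step P (Vis e) P'" "par_mem (eset_val E) t (sem P') (sem Q)" by blast
        moreover have "step (Par P E Q) (Vis e) (Par P' E Q)"
          using step.s6[OF \<open>step P (Vis e) P'\<close> _ vQ] False by (simp add: act_in_def)
        moreover have "t \<in> sem (Par P' E Q)" using \<open>par_mem (eset_val E) t (sem P') (sem Q)\<close>
          by (simp add: parT_def)
        ultimately show ?thesis by blast
      next
        assume "par_mem (eset_val E) t (sem P) (afterT (sem Q) e)"
        then have "par_mem (eset_val E) t (afterT (sem Q) e) (sem P)"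
          by (rule par_mem_symI)
        then have "par_mem (eset_val E) t (\<Union>{sem R' |R'. step Q (Vis e) R'}) (sem P)"
          by (rule par_mem_mono[OF cov[OF Par.IH(2)] order_refl])
        from par_mem_Union_ex[OF this] obtain Q' where
          Q': "step Q (Vis e) Q'" "par_mem (eset_val E) t (sem Q') (sem P)" by blast
        from Q'(2) have "par_mem (eset_val E) t (sem P) (sem Q')" by (rule par_mem_symI)
        note Q'(1) this
        moreover have "step (Par P E Q) (Vis e) (Par P E Q')"
          using step.s7[OF \<open>step Q (Vis e) Q'\<close> _ vP] False by (simp add: act_in_def)
        moreover have "t \<in> sem (Par P E Q')" using \<open>par_mem (eset_val E) t (sem P) (sem Q')\<close>
          by (simp add: parT_def)
        ultimately show ?thesis by blast
      qed
    qed
  qed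
qed auto

lemma complete: "s \<in> sem P \<Longrightarrow> \<exists>M. weak P s M \<and> \<not> doomed M"
proof (induction s arbitrary: P)
  case Nil
  then have "\<not> doomed P" using doomed_sem by blast
  moreover have "weak P [] P" by (rule weak_refl)
  ultimately show ?case by blast
next
  case (Cons e t)
  obtain P' where P': "step P (Vis e) P'" "t \<in> sem P'"
    using step_complete[of e P] Cons.prems by blast
  obtain M where M: "weak P' t M" "\<not> doomed M" using Cons.IH[OF P'(2)] by blast
  have "weak P (e # t) M" using weak_vis[OF P'(1) M(1)] .
  then show ?case using M(2) by blast
qed

theorem theorem1:
  fixes P :: "'e proc"
  assumes "closed P"
  shows "sem P = {s. \<exists>M. weak P s M \<and> \<not> doomed M}"
proof (rule set_eqI)
  fix s
  show "s \<in> sem P \<longleftrightarrow> s \<in> {s. \<exists>M. weak P s M \<and> \<not> doomed M}"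
    using sound[of P s] complete[of s P] by blast
qed

end
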